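(* Let $\mathbb{X}$ be a category with finite products. For pre-$\mathsf{D}$-sequences $f_\bullet:A\to B$ and $g_\bullet:B\to C$: (i) $\mathsf{T}(i_\bullet)=i_\bullet$ (with $i_\bullet$ on the left the identity of $A$ and on the right the identity of $A\times A$); (ii) $\mathsf{T}(f_\bullet\ast g_\bullet)=\mathsf{T}(f_\bullet)\ast\mathsf{T}(g_\bullet)$.
   Context: Composition in diagrammatic order. $\mathsf{P}(A)=A\times A$, $\mathsf{P}(f)=f\times f$. A pre-$\mathsf{D}$-sequence $f_\bullet:A\to B$ is $(f_n)_{n\ge0}$ with $f_n:\mathsf{P}^n(A)\to B$. Tangent $\mathsf{T}(f_\bullet):\mathsf{P}(A)\to\mathsf{P}(B)$, $\mathsf{T}(f_\bullet)_n=\langle\mathsf{P}^n(\pi_0)f_n,f_{n+1}\rangle$, with $\mathsf{T}^n$ its iterate. Identity $i_\bullet:A\to A$: $i_0=1_A$, $i_n=\pi_1\cdots\pi_1:\mathsf{P}^n(A)\to A$ ($n$ projections). Composition $(f_\bullet\ast g_\bullet)_n=\mathsf{T}^n(f_\bullet)_0\,g_n$. *)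

theory Defs
  imports Main
begin

text \<open>A category with (chosen) finite products, morphisms carrying their domain and
codomain. Composition is written in diagrammatic order: comp f g means "first f, then g".\<close>

record ('o, 'm) fpcat =
  Ob   :: "'o set"
  Mor  :: "'m set"
  dom  :: "'m \<Rightarrow> 'o"
  cod  :: "'m \<Rightarrow> 'o"
  comp :: "'m \<Rightarrow> 'm \<Rightarrow> 'm"
  idm  :: "'o \<Rightarrow> 'm"
  trm  :: "'o"
  bang :: "'o \<Rightarrow> 'm"
  prd  :: "'o \<Rightarrow> 'o \<Rightarrow> 'o"
  p0   :: "'o \<Rightarrow> 'o \<Rightarrow> 'm"
  p1   :: "'o \<Rightarrow> 'o \<Rightarrow> 'm"
  pair :: "'m \<Rightarrow> 'm \<Rightarrow> 'm"

definition hom :: "('o, 'm, 'x) fpcat_scheme \<Rightarrow> 'o \<Rightarrow> 'o \<Rightarrow> 'm set" where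
  "hom C A B = {f \<in> Mor C. dom C f = A \<and> cod C f = B}"

definition fp_category :: "('o, 'm, 'x) fpcat_scheme \<Rightarrow> bool" where
  "fp_category C \<longleftrightarrow>
     (\<forall>f \<in> Mor C. dom C f \<in> Ob C \<and> cod C f \<in> Ob C)
   \<and> (\<forall>A \<in> Ob C. idm C A \<in> hom C A A)
   \<and> (\<forall>A \<in> Ob C. \<forall>B \<in> Ob C. \<forall>D \<in> Ob C. \<forall>f \<in> hom C A B. \<forall>g \<in> hom C B D.
          comp C f g \<in> hom C A D)
   \<and> (\<forall>A \<in> Ob C. \<forall>B \<in> Ob C. \<forall>f \<in> hom C A B.
          comp C (idm C A) f = f \<and> comp C f (idm C B) = f)
   \<and> (\<forall>A \<in> Ob C. \<forall>B \<in> Ob C. \<forall>D \<in> Ob C. \<forall>E \<in> Ob C.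
        \<forall>f \<in> hom C A B. \<forall>g \<in> hom C B D. \<forall>h \<in> hom C D E.
          comp C (comp C f g) h = comp C f (comp C g h))
   \<and> trm C \<in> Ob C
   \<and> (\<forall>A \<in> Ob C. bang C A \<in> hom C A (trm C) \<and> (\<forall>f \<in> hom C A (trm C). f = bang C A))
   \<and> (\<forall>A \<in> Ob C. \<forall>B \<in> Ob C.
        prd C A B \<in> Ob C
      \<and> p0 C A B \<in> hom C (prd C A B) A
      \<and> p1 C A B \<in> hom C (prd C A B) B
      \<and> (\<forall>X \<in> Ob C. \<forall>f \<in> hom C X A. \<forall>g \<in> hom C X B.
           pair C f g \<in> hom C X (prd C A B)
         \<and> comp C (pair C f g) (p0 C A B) = f
         \<and> comp C (pair C f g) (p1 C A B) = g)
      \<and> (\<forall>X \<in> Ob C. \<forall>h \<in> hom C X (prd C A B).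
           pair C (comp C h (p0 C A B)) (comp C h (p1 C A B)) = h))"

definition PO :: "('o, 'm, 'x) fpcat_scheme \<Rightarrow> 'o \<Rightarrow> 'o" where
  "PO C A = prd C A A"

definition PM :: "('o, 'm, 'x) fpcat_scheme \<Rightarrow> 'm \<Rightarrow> 'm" where
  "PM C f = pair C (comp C (p0 C (dom C f) (dom C f)) f) (comp C (p1 C (dom C f) (dom C f)) f)"

primrec POn :: "('o, 'm, 'x) fpcat_scheme \<Rightarrow> nat \<Rightarrow> 'o \<Rightarrow> 'o" where
  "POn C 0 A = A"
| "POn C (Suc n) A = PO C (POn C n A)"

primrec PMn :: "('o, 'm, 'x) fpcat_scheme \<Rightarrow> nat \<Rightarrow> 'm \<Rightarrow> 'm" where
  "PMn C 0 f = f"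
| "PMn C (Suc n) f = PM C (PMn C n f)"

definition preD :: "('o, 'm, 'x) fpcat_scheme \<Rightarrow> 'o \<Rightarrow> 'o \<Rightarrow> (nat \<Rightarrow> 'm) \<Rightarrow> bool" where
  "preD C A B f \<longleftrightarrow> (\<forall>n. f n \<in> hom C (POn C n A) B)"

definition Tseq :: "('o, 'm, 'x) fpcat_scheme \<Rightarrow> 'o \<Rightarrow> (nat \<Rightarrow> 'm) \<Rightarrow> nat \<Rightarrow> 'm" where
  "Tseq C A f n = pair C (comp C (PMn C n (p0 C A A)) (f n)) (f (Suc n))"

primrec Tn :: "('o, 'm, 'x) fpcat_scheme \<Rightarrow> nat \<Rightarrow> 'o \<Rightarrow> (nat \<Rightarrow> 'm) \<Rightarrow> nat \<Rightarrow> 'm" where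
  "Tn C 0 A f = f"
| "Tn C (Suc k) A f = Tseq C (POn C k A) (Tn C k A f)"

primrec idseq :: "('o, 'm, 'x) fpcat_scheme \<Rightarrow> 'o \<Rightarrow> nat \<Rightarrow> 'm" where
  "idseq C A 0 = idm C A"
| "idseq C A (Suc n) = comp C (p1 C (POn C n A) (POn C n A)) (idseq C A n)"

definition seqcomp :: "('o, 'm, 'x) fpcat_scheme \<Rightarrow> 'o \<Rightarrow> (nat \<Rightarrow> 'm) \<Rightarrow> (nat \<Rightarrow> 'm) \<Rightarrow> nat \<Rightarrow> 'm" where
  "seqcomp C A f g n = comp C (Tn C n A f 0) (g n)"

end

theory Submission
  imports Defs
begin

lemma POn_PO: "POn C n (PO C X) = POn C (Suc n) X"
  by (induction n) auto

lemma PMn_PM: "PMn C n (PM C h) = PM C (PMn C n h)"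
  by (induction n) auto

lemma Tn_Tseq: "Tn C n (PO C A) (Tseq C A f) = Tn C (Suc n) A f"
proof (induction n)
  case 0 then show ?case by simp
next
  case (Suc n)
  have "Tn C (Suc n) (PO C A) (Tseq C A f) = Tseq C (POn C n (PO C A)) (Tn C n (PO C A) (Tseq C A f))"
    by simp
  also have "\<dots> = Tseq C (POn C (Suc n) A) (Tn C (Suc n) A f)" using Suc by (simp only: POn_PO)
  finally show ?case by simp
qed

locale fpc =
  fixes C :: "('o, 'm, 'x) fpcat_scheme"
  assumes cat: "fp_category C"
begin

lemmas ax = cat[unfolded fp_category_def]
lemmas ax1 = ax[THEN conjunct1]
lemmas ax2 = ax[THEN conjunct2, THEN conjunct1]
lemmas ax3 = ax[THEN conjunct2, THEN conjunct2, THEN conjunct1]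
lemmas ax4 = ax[THEN conjunct2, THEN conjunct2, THEN conjunct2, THEN conjunct1]
lemmas ax5 = ax[THEN conjunct2, THEN conjunct2, THEN conjunct2, THEN conjunct2, THEN conjunct1]
lemmas ax8 = ax[THEN conjunct2, THEN conjunct2, THEN conjunct2, THEN conjunct2, THEN conjunct2,
  THEN conjunct2, THEN conjunct2]

lemma homD: "f \<in> hom C X Y \<Longrightarrow> f \<in> Mor C \<and> dom C f = X \<and> cod C f = Y"
  by (simp add: hom_def)

lemma hom_ob: "f \<in> hom C X Y \<Longrightarrow> X \<in> Ob C \<and> Y \<in> Ob C"
  using ax1 unfolding hom_def by auto

lemma comp_hom: "f \<in> hom C X Y \<Longrightarrow> g \<in> hom C Y Z \<Longrightarrow> comp C f g \<in> hom C X Z"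
  using ax3 hom_ob[of f X Y] hom_ob[of g Y Z] by blast

lemma id_hom: "X \<in> Ob C \<Longrightarrow> idm C X \<in> hom C X X"
  using ax2 by blast

lemma id_left: "f \<in> hom C X Y \<Longrightarrow> comp C (idm C X) f = f"
  using ax4 hom_ob[of f X Y] by blast

lemma id_right: "f \<in> hom C X Y \<Longrightarrow> comp C f (idm C Y) = f"
  using ax4 hom_ob[of f X Y] by blast

lemma assoc: "f \<in> hom C X Y \<Longrightarrow> g \<in> hom C Y Z \<Longrightarrow> h \<in> hom C Z W \<Longrightarrow>
    comp C (comp C f g) h = comp C f (comp C g h)"
  using ax5 hom_ob[of f X Y] hom_ob[of g Y Z] hom_ob[of h Z W] by blast

lemma prd_ob: "A \<in> Ob C \<Longrightarrow> B \<in> Ob C \<Longrightarrow> prd C A B \<in> Ob C"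
  using ax8 by blast

lemma p0_hom: "A \<in> Ob C \<Longrightarrow> B \<in> Ob C \<Longrightarrow> p0 C A B \<in> hom C (prd C A B) A"
  using ax8 by blast

lemma p1_hom: "A \<in> Ob C \<Longrightarrow> B \<in> Ob C \<Longrightarrow> p1 C A B \<in> hom C (prd C A B) B"
  using ax8 by blast

lemma pair_hom: "a \<in> hom C X A \<Longrightarrow> b \<in> hom C X B \<Longrightarrow> pair C a b \<in> hom C X (prd C A B)"
  using ax8 hom_ob[of a X A] hom_ob[of b X B] by blast

lemma pair_p0: "a \<in> hom C X A \<Longrightarrow> b \<in> hom C X B \<Longrightarrow> comp C (pair C a b) (p0 C A B) = a"
  using ax8 hom_ob[of a X A] hom_ob[of b X B] by blast

lemma pair_p1: "a \<in> hom C X A \<Longrightarrow> b \<in> hom C X B \<Longrightarrow> comp C (pair C a b) (p1 C A B) = b"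
  using ax8 hom_ob[of a X A] hom_ob[of b X B] by blast

lemma pair_eta: "A \<in> Ob C \<Longrightarrow> B \<in> Ob C \<Longrightarrow> h \<in> hom C X (prd C A B) \<Longrightarrow>
    pair C (comp C h (p0 C A B)) (comp C h (p1 C A B)) = h"
  using ax8 hom_ob[of h X "prd C A B"] by blast

lemma pair_ext:
  assumes "A \<in> Ob C" "B \<in> Ob C" "h \<in> hom C X (prd C A B)" "k \<in> hom C X (prd C A B)"
    "comp C h (p0 C A B) = comp C k (p0 C A B)" "comp C h (p1 C A B) = comp C k (p1 C A B)"
  shows "h = k"
  by (metis assms pair_eta)

lemma comp_pair:
  assumes k: "k \<in> hom C W X" and a: "a \<in> hom C X A" and b: "b \<in> hom C X B"
  shows "comp C k (pair C a b) = pair C (comp C k a) (comp C k b)"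
proof -
  have A: "A \<in> Ob C" and B: "B \<in> Ob C" using hom_ob a b by auto
  have ka: "comp C k a \<in> hom C W A" and kb: "comp C k b \<in> hom C W B"
    using comp_hom k a b by auto
  show ?thesis
  proof (rule pair_ext[OF A B])
    show "comp C k (pair C a b) \<in> hom C W (prd C A B)" using comp_hom k pair_hom a b by blast
    show "pair C (comp C k a) (comp C k b) \<in> hom C W (prd C A B)" using pair_hom ka kb by blast
    show "comp C (comp C k (pair C a b)) (p0 C A B) = comp C (pair C (comp C k a) (comp C k b)) (p0 C A B)"
      using assoc[OF k pair_hom[OF a b] p0_hom[OF A B]] pair_p0[OF a b] pair_p0[OF ka kb] by simp
    show "comp C (comp C k (pair C a b)) (p1 C A B) = comp C (pair C (comp C k a) (comp C k b)) (p1 C A B)"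
      using assoc[OF k pair_hom[OF a b] p1_hom[OF A B]] pair_p1[OF a b] pair_p1[OF ka kb] by simp
  qed
qed

lemma PO_ob: "X \<in> Ob C \<Longrightarrow> PO C X \<in> Ob C"
  by (simp add: PO_def prd_ob)

lemma POn_ob: "X \<in> Ob C \<Longrightarrow> POn C n X \<in> Ob C"
  by (induction n) (auto simp: PO_ob)

lemma PM_hom: assumes h: "h \<in> hom C X Y" shows "PM C h \<in> hom C (PO C X) (PO C Y)"
proof -
  have X: "X \<in> Ob C" and Y: "Y \<in> Ob C" using hom_ob h by auto
  have d: "dom C h = X" using homD h by auto
  show ?thesis unfolding PM_def d PO_def
    by (rule pair_hom; rule comp_hom[OF _ h]; simp add: p0_hom p1_hom X)
qed

lemma PM_p0: assumes h: "h \<in> hom C X Y" shows "comp C (PM C h) (p0 C Y Y) = comp C (p0 C X X) h"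
proof -
  have X: "X \<in> Ob C" and Y: "Y \<in> Ob C" using hom_ob h by auto
  have d: "dom C h = X" using homD h by auto
  show ?thesis unfolding PM_def d
    by (rule pair_p0[OF comp_hom[OF p0_hom[OF X X] h] comp_hom[OF p1_hom[OF X X] h]])
qed

lemma PM_p1: assumes h: "h \<in> hom C X Y" shows "comp C (PM C h) (p1 C Y Y) = comp C (p1 C X X) h"
proof -
  have X: "X \<in> Ob C" and Y: "Y \<in> Ob C" using hom_ob h by auto
  have d: "dom C h = X" using homD h by auto
  show ?thesis unfolding PM_def d
    by (rule pair_p1[OF comp_hom[OF p0_hom[OF X X] h] comp_hom[OF p1_hom[OF X X] h]])
qed

lemma PM_comp:
  assumes h: "h \<in> hom C X Y" and k: "k \<in> hom C Y Z"
  shows "PM C (comp C h k) = comp C (PM C h) (PM C k)"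
proof -
  have X: "X \<in> Ob C" and Y: "Y \<in> Ob C" and Z: "Z \<in> Ob C" using hom_ob h k by auto
  have hk: "comp C h k \<in> hom C X Z" using comp_hom h k by blast
  show ?thesis
  proof (rule pair_ext[OF Z Z])
    show "PM C (comp C h k) \<in> hom C (PO C X) (prd C Z Z)" using PM_hom[OF hk] by (simp add: PO_def)
    show "comp C (PM C h) (PM C k) \<in> hom C (PO C X) (prd C Z Z)"
      using comp_hom[OF PM_hom[OF h] PM_hom[OF k]] by (simp add: PO_def)
    show "comp C (PM C (comp C h k)) (p0 C Z Z) = comp C (comp C (PM C h) (PM C k)) (p0 C Z Z)"
      using PM_p0[OF hk] assoc[OF PM_hom[OF h] PM_hom[OF k] p0_hom[OF Z Z, folded PO_def]]
        PM_p0[OF k] PM_p0[OF h] assoc[OF PM_hom[OF h] p0_hom[OF Y Y, folded PO_def] k]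
        assoc[OF p0_hom[OF X X, folded PO_def] h k]
      by simp
    show "comp C (PM C (comp C h k)) (p1 C Z Z) = comp C (comp C (PM C h) (PM C k)) (p1 C Z Z)"
      using PM_p1[OF hk] assoc[OF PM_hom[OF h] PM_hom[OF k] p1_hom[OF Z Z, folded PO_def]]
        PM_p1[OF k] PM_p1[OF h] assoc[OF PM_hom[OF h] p1_hom[OF Y Y, folded PO_def] k]
        assoc[OF p1_hom[OF X X, folded PO_def] h k]
      by simp
  qed
qed

lemma PMn_hom: "h \<in> hom C X Y \<Longrightarrow> PMn C n h \<in> hom C (POn C n X) (POn C n Y)"
  by (induction n) (auto simp: PM_hom)

lemma PMn_comp: "h \<in> hom C X Y \<Longrightarrow> k \<in> hom C Y Z \<Longrightarrow>
    PMn C n (comp C h k) = comp C (PMn C n h) (PMn C n k)"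
proof (induction n)
  case 0 then show ?case by simp
next
  case (Suc n)
  have "PMn C n h \<in> hom C (POn C n X) (POn C n Y)" "PMn C n k \<in> hom C (POn C n Y) (POn C n Z)"
    using Suc.prems PMn_hom by auto
  then show ?case using Suc by (simp add: PM_comp)
qed

lemma idseq_hom: "X \<in> Ob C \<Longrightarrow> idseq C X n \<in> hom C (POn C n X) X"
proof (induction n)
  case 0 then show ?case by (simp add: id_hom)
next
  case (Suc n)
  then show ?case using comp_hom p1_hom POn_ob by (simp add: PO_def) blast
qed

lemma idseq_nat: assumes h: "h \<in> hom C X Y"
  shows "comp C (PMn C n h) (idseq C Y n) = comp C (idseq C X n) h"
proof (induction n)
  case 0 then show ?case using id_left id_right h by simp
next
  case (Suc n)
  have X: "X \<in> Ob C" and Y: "Y \<in> Ob C" using hom_ob h by auto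
  have hn: "PMn C n h \<in> hom C (POn C n X) (POn C n Y)" using PMn_hom h by blast
  have p1Y: "p1 C (POn C n Y) (POn C n Y) \<in> hom C (PO C (POn C n Y)) (POn C n Y)"
    using p1_hom POn_ob Y by (simp add: PO_def)
  have p1X: "p1 C (POn C n X) (POn C n X) \<in> hom C (PO C (POn C n X)) (POn C n X)"
    using p1_hom POn_ob X by (simp add: PO_def)
  have "comp C (PMn C (Suc n) h) (idseq C Y (Suc n))
      = comp C (PM C (PMn C n h)) (comp C (p1 C (POn C n Y) (POn C n Y)) (idseq C Y n))" by simp
  also have "\<dots> = comp C (comp C (PM C (PMn C n h)) (p1 C (POn C n Y) (POn C n Y))) (idseq C Y n)"
    using assoc[OF PM_hom[OF hn] p1Y idseq_hom[OF Y]] by simp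
  also have "\<dots> = comp C (comp C (p1 C (POn C n X) (POn C n X)) (PMn C n h)) (idseq C Y n)"
    using PM_p1[OF hn] by simp
  also have "\<dots> = comp C (p1 C (POn C n X) (POn C n X)) (comp C (idseq C X n) h)"
    using assoc[OF p1X hn idseq_hom[OF Y]] Suc by simp
  also have "\<dots> = comp C (idseq C X (Suc n)) h"
    using assoc[OF p1X idseq_hom[OF X] h] by simp
  finally show ?case .
qed

lemma idseq_Suc': assumes X: "X \<in> Ob C"
  shows "idseq C X (Suc n) = comp C (idseq C (PO C X) n) (p1 C X X)"
proof (induction n)
  case 0
  then show ?case using id_right id_left p1_hom[OF X X] by (simp add: PO_def)
next
  case (Suc n)
  have p1a: "p1 C (POn C (Suc n) X) (POn C (Suc n) X) \<in> hom C (POn C (Suc (Suc n)) X) (POn C (Suc n) X)"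
    using p1_hom[OF POn_ob[OF X] POn_ob[OF X], of "Suc n" "Suc n"] by (simp add: PO_def)
  have ih: "idseq C (PO C X) n \<in> hom C (POn C (Suc n) X) (PO C X)"
    using idseq_hom[OF PO_ob[OF X], of n] by (simp add: POn_PO)
  have "idseq C X (Suc (Suc n)) = comp C (p1 C (POn C (Suc n) X) (POn C (Suc n) X)) (idseq C X (Suc n))"
    by simp
  also have "\<dots> = comp C (p1 C (POn C (Suc n) X) (POn C (Suc n) X)) (comp C (idseq C (PO C X) n) (p1 C X X))"
    using Suc by simp
  also have "\<dots> = comp C (comp C (p1 C (POn C (Suc n) X) (POn C (Suc n) X)) (idseq C (PO C X) n)) (p1 C X X)"
    using assoc[OF p1a ih p1_hom[OF X X, folded PO_def]] by simp
  also have "\<dots> = comp C (idseq C (PO C X) (Suc n)) (p1 C X X)"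
    by (simp add: POn_PO)
  finally show ?case .
qed

lemma part1: assumes A: "A \<in> Ob C" shows "Tseq C A (idseq C A) = idseq C (PO C A)"
proof
  fix n
  have i: "idseq C (PO C A) n \<in> hom C (POn C n (PO C A)) (prd C A A)"
    using idseq_hom[OF PO_ob[OF A]] by (simp add: PO_def)
  have "Tseq C A (idseq C A) n = pair C (comp C (PMn C n (p0 C A A)) (idseq C A n)) (idseq C A (Suc n))"
    by (simp add: Tseq_def)
  also have "\<dots> = pair C (comp C (idseq C (PO C A) n) (p0 C A A)) (comp C (idseq C (PO C A) n) (p1 C A A))"
    using idseq_nat[OF p0_hom[OF A A, folded PO_def]] idseq_Suc'[OF A] by simp
  also have "\<dots> = idseq C (PO C A) n" using pair_eta[OF A A i] .
  finally show "Tseq C A (idseq C A) n = idseq C (PO C A) n" .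
qed

lemma Tseq_preD: assumes h: "preD C X Y h" and X: "X \<in> Ob C" and Y: "Y \<in> Ob C"
  shows "preD C (PO C X) (PO C Y) (Tseq C X h)"
  unfolding preD_def
proof
  fix n
  have "PMn C n (p0 C X X) \<in> hom C (POn C n (PO C X)) (POn C n X)"
    using PMn_hom p0_hom[OF X X, folded PO_def] by blast
  moreover have "h n \<in> hom C (POn C n X) Y" "h (Suc n) \<in> hom C (POn C n (PO C X)) Y"
    using h[unfolded preD_def, rule_format, of n] h[unfolded preD_def, rule_format, of "Suc n"]
    by (simp_all add: POn_PO)
  ultimately show "Tseq C X h n \<in> hom C (POn C n (PO C X)) (PO C Y)"
    unfolding Tseq_def PO_def[of C Y] by (intro pair_hom comp_hom)
qed

lemma Tn_preD: "preD C A B f \<Longrightarrow> A \<in> Ob C \<Longrightarrow> B \<in> Ob C \<Longrightarrow>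
    preD C (POn C k A) (POn C k B) (Tn C k A f)"
  by (induction k) (auto intro: Tseq_preD POn_ob)

lemma p0_PO: "X \<in> Ob C \<Longrightarrow> p0 C X X \<in> hom C (PO C X) X"
  using p0_hom by (simp add: PO_def)
lemma p1_PO: "X \<in> Ob C \<Longrightarrow> p1 C X X \<in> hom C (PO C X) X"
  using p1_hom by (simp add: PO_def)
lemma pair_PO: "a \<in> hom C Z X \<Longrightarrow> b \<in> hom C Z X \<Longrightarrow> pair C a b \<in> hom C Z (PO C X)"
  using pair_hom by (simp add: PO_def)

lemma natT:
  assumes f: "preD C A B f" and A: "A \<in> Ob C" and B: "B \<in> Ob C"
  shows "comp C (Tn C n (PO C A) (Tseq C A f) m) (PMn C n (p0 C B B))
       = comp C (PMn C m (PMn C n (p0 C A A))) (Tn C n A f m)"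
proof (induction n arbitrary: m)
  case 0
  have a: "comp C (PMn C m (p0 C A A)) (f m) \<in> hom C (POn C m (PO C A)) B"
    using comp_hom[OF PMn_hom[OF p0_PO[OF A]] f[unfolded preD_def, rule_format, of m]] .
  have b: "f (Suc m) \<in> hom C (POn C m (PO C A)) B"
    using f[unfolded preD_def, rule_format, of "Suc m"] by (simp add: POn_PO)
  show ?case using pair_p0[OF a b] by (simp add: Tseq_def)
next
  case (Suc n)
  define Xn where "Xn = POn C n (PO C A)"
  define Yn where "Yn = POn C n (PO C B)"
  define UU where "UU = POn C n A"
  define Vn where "Vn = POn C n B"
  define q where "q = PMn C n (p0 C A A)"
  define r where "r = PMn C n (p0 C B B)"
  define S where "S = Tn C n (PO C A) (Tseq C A f)"
  define R where "R = Tn C n A f"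
  have Xo: "Xn \<in> Ob C" and Yo: "Yn \<in> Ob C" and Uo: "UU \<in> Ob C" and Vo: "Vn \<in> Ob C"
    using POn_ob PO_ob A B by (auto simp: Xn_def Yn_def UU_def Vn_def)
  have q: "q \<in> hom C Xn UU" unfolding q_def Xn_def UU_def using PMn_hom p0_PO A by blast
  have r: "r \<in> hom C Yn Vn" unfolding r_def Yn_def Vn_def using PMn_hom p0_PO B by blast
  have S: "preD C Xn Yn S" unfolding S_def Xn_def Yn_def
    using Tn_preD Tseq_preD f A B PO_ob by blast
  have R: "preD C UU Vn R" unfolding R_def UU_def Vn_def
    using Tn_preD f A B by blast
  have IH: "\<And>m. comp C (S m) r = comp C (PMn C m q) (R m)"
    using Suc unfolding S_def r_def q_def R_def .
  have p0X: "PMn C m (p0 C Xn Xn) \<in> hom C (POn C m (PO C Xn)) (POn C m Xn)"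
    using PMn_hom p0_PO Xo by blast
  have Sm: "S m \<in> hom C (POn C m Xn) Yn" using S by (simp add: preD_def)
  have Sm1: "S (Suc m) \<in> hom C (POn C m (PO C Xn)) Yn"
    using S[unfolded preD_def, rule_format, of "Suc m"] by (simp add: POn_PO)
  have Rm: "R m \<in> hom C (POn C m UU) Vn" using R by (simp add: preD_def)
  have Rm1: "R (Suc m) \<in> hom C (POn C m (PO C UU)) Vn"
    using R[unfolded preD_def, rule_format, of "Suc m"] by (simp add: POn_PO)
  have qm: "PMn C m q \<in> hom C (POn C m Xn) (POn C m UU)" using PMn_hom q by blast
  have p0U: "PMn C m (p0 C UU UU) \<in> hom C (POn C m (PO C UU)) (POn C m UU)"
    using PMn_hom p0_PO Uo by blast
  have PMq: "PMn C m (PM C q) \<in> hom C (POn C m (PO C Xn)) (POn C m (PO C UU))"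
    using PMn_hom PM_hom q by blast
  define a where "a = comp C (PMn C m (p0 C Xn Xn)) (S m)"
  have a: "a \<in> hom C (POn C m (PO C Xn)) Yn" unfolding a_def using comp_hom p0X Sm by blast
  have L1: "Tn C (Suc n) (PO C A) (Tseq C A f) m = pair C a (S (Suc m))"
    by (simp add: S_def Xn_def a_def Tseq_def)
  have L2: "PMn C (Suc n) (p0 C B B) = pair C (comp C (p0 C Yn Yn) r) (comp C (p1 C Yn Yn) r)"
    using homD[OF r] by (simp add: r_def PM_def)
  have ab: "pair C a (S (Suc m)) \<in> hom C (POn C m (PO C Xn)) (prd C Yn Yn)"
    using pair_hom a Sm1 by blast
  have "comp C (Tn C (Suc n) (PO C A) (Tseq C A f) m) (PMn C (Suc n) (p0 C B B))
      = pair C (comp C (pair C a (S (Suc m))) (comp C (p0 C Yn Yn) r))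
               (comp C (pair C a (S (Suc m))) (comp C (p1 C Yn Yn) r))"
    unfolding L1 L2 by (rule comp_pair[OF ab comp_hom[OF p0_hom[OF Yo Yo] r] comp_hom[OF p1_hom[OF Yo Yo] r]])
  also have "\<dots> = pair C (comp C a r) (comp C (S (Suc m)) r)"
    using assoc[OF ab p0_hom[OF Yo Yo] r, symmetric] assoc[OF ab p1_hom[OF Yo Yo] r, symmetric]
      pair_p0[OF a Sm1] pair_p1[OF a Sm1] by simp
  also have "comp C a r = comp C (PMn C m (p0 C Xn Xn)) (comp C (PMn C m q) (R m))"
    unfolding a_def using assoc[OF p0X Sm r] IH by simp
  also have "\<dots> = comp C (PMn C m (PM C q)) (comp C (PMn C m (p0 C UU UU)) (R m))"
  proof -
    have "comp C (PMn C m (p0 C Xn Xn)) (comp C (PMn C m q) (R m))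
        = comp C (comp C (PMn C m (p0 C Xn Xn)) (PMn C m q)) (R m)"
      using assoc[OF p0X qm Rm] by simp
    also have "\<dots> = comp C (PMn C m (comp C (p0 C Xn Xn) q)) (R m)"
      using PMn_comp[OF p0_PO[OF Xo] q] by simp
    also have "\<dots> = comp C (PMn C m (comp C (PM C q) (p0 C UU UU))) (R m)"
      using PM_p0[OF q] by simp
    also have "\<dots> = comp C (comp C (PMn C m (PM C q)) (PMn C m (p0 C UU UU))) (R m)"
      using PMn_comp[OF PM_hom[OF q] p0_PO[OF Uo]] by simp
    also have "\<dots> = comp C (PMn C m (PM C q)) (comp C (PMn C m (p0 C UU UU)) (R m))"
      using assoc[OF PMq p0U Rm] by simp
    finally show ?thesis .
  qed
  also have "comp C (S (Suc m)) r = comp C (PMn C m (PM C q)) (R (Suc m))"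
    using IH[of "Suc m"] by (simp add: PMn_PM)
  also have "pair C (comp C (PMn C m (PM C q)) (comp C (PMn C m (p0 C UU UU)) (R m)))
                    (comp C (PMn C m (PM C q)) (R (Suc m)))
           = comp C (PMn C m (PM C q)) (pair C (comp C (PMn C m (p0 C UU UU)) (R m)) (R (Suc m)))"
    using comp_pair[OF PMq comp_hom[OF p0U Rm] Rm1] by simp
  also have "\<dots> = comp C (PMn C m (PMn C (Suc n) (p0 C A A))) (Tn C (Suc n) A f m)"
    by (simp add: R_def UU_def q_def Tseq_def PMn_PM)
  finally show ?case .
qed

end

theorem lemma3p6:
  fixes C :: "('o, 'm) fpcat"
  assumes cat: "fp_category C"
    and obs: "A \<in> Ob C" "B \<in> Ob C" "D \<in> Ob C"
    and f: "preD C A B f" and g: "preD C B D g"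
  shows "Tseq C A (idseq C A) = idseq C (PO C A)
         \<and> Tseq C A (seqcomp C A f g) = seqcomp C (PO C A) (Tseq C A f) (Tseq C B g)"
proof
  interpret fpc C by (rule fpc.intro[OF cat])
  have A: "A \<in> Ob C" and B: "B \<in> Ob C" using obs by auto
  show "Tseq C A (idseq C A) = idseq C (PO C A)" using part1[OF A] .
  show "Tseq C A (seqcomp C A f g) = seqcomp C (PO C A) (Tseq C A f) (Tseq C B g)"
  proof
    fix n
    define X where "X = Tn C (Suc n) A f 0"
    define r where "r = PMn C n (p0 C B B)"
    define q where "q = PMn C n (p0 C A A)"
    have X: "X \<in> hom C (POn C (Suc n) A) (POn C (Suc n) B)"
      using Tn_preD[OF f A B, of "Suc n"] unfolding X_def preD_def by (metis POn.simps(1))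
    have r: "r \<in> hom C (POn C (Suc n) B) (POn C n B)"
      using PMn_hom[OF p0_PO[OF B], of n] by (simp add: r_def POn_PO)
    have q: "q \<in> hom C (POn C (Suc n) A) (POn C n A)"
      using PMn_hom[OF p0_PO[OF A], of n] by (simp add: q_def POn_PO)
    have T0: "Tn C n A f 0 \<in> hom C (POn C n A) (POn C n B)"
      using Tn_preD[OF f A B, of n] unfolding preD_def by (metis POn.simps(1))
    have gn: "g n \<in> hom C (POn C n B) D" and gs: "g (Suc n) \<in> hom C (POn C (Suc n) B) D"
      using g[unfolded preD_def, rule_format, of n] g[unfolded preD_def, rule_format, of "Suc n"] by auto
    have nat: "comp C X r = comp C q (Tn C n A f 0)"
      using natT[OF f A B, of n 0] by (simp add: X_def r_def q_def Tn_Tseq)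
    have "seqcomp C (PO C A) (Tseq C A f) (Tseq C B g) n
        = comp C X (pair C (comp C r (g n)) (g (Suc n)))"
      by (simp add: seqcomp_def Tseq_def X_def r_def Tn_Tseq)
    also have "\<dots> = pair C (comp C X (comp C r (g n))) (comp C X (g (Suc n)))"
      by (rule comp_pair[OF X comp_hom[OF r gn] gs])
    also have "comp C X (comp C r (g n)) = comp C q (comp C (Tn C n A f 0) (g n))"
      using assoc[OF X r gn, symmetric] nat assoc[OF q T0 gn] by simp
    finally have rhs: "seqcomp C (PO C A) (Tseq C A f) (Tseq C B g) n
       = pair C (comp C q (comp C (Tn C n A f 0) (g n))) (comp C X (g (Suc n)))" .
    have lhs: "Tseq C A (seqcomp C A f g) n
       = pair C (comp C q (comp C (Tn C n A f 0) (g n))) (comp C X (g (Suc n)))"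
      unfolding Tseq_def[of C A] seqcomp_def X_def q_def by (rule refl)
    show "Tseq C A (seqcomp C A f g) n = seqcomp C (PO C A) (Tseq C A f) (Tseq C B g) n"
      using lhs rhs by simp
  qed
qed

end
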